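(* (1) The sets $A$, $A+A$ and $A\times A$ are infinite, but none of them is FSM Mostowski infinite and none is FSM Tarski II infinite. (2) None of $\wp_{fin}(A)$, $\wp_{cofin}(A)$, $\wp_{fs}(A)$, $\wp_{fin}(\wp_{fs}(A))$ is FSM Mostowski infinite. (3) None of $A^A_{fs}$, $T_{fin}(A)^A_{fs}$, $\wp_{fs}(A)^A_{fs}$ is FSM Mostowski infinite.
   Context: Framework (FSM). Work in ZF with a fixed infinite set $A$ of atoms; $S_A$ is the group of bijections of $A$ fixing all but finitely many atoms, acting on $A$ by evaluation; $Fix(S)$ is the set of $\pi\in S_A$ fixing each element of $S\subseteq A$; $S$ supports $x$ if $\pi\cdot x=x$ for all $\pi\in Fix(S)$. Products carry the componentwise action; $X+Y=\{(0,x):x\in X\}\cup\{(1,y):y\in Y\}$ with $\pi\cdot(i,z)=(i,\pi\cdot z)$; subsets carry $\pi\star W=\{\pi\cdot w:w\in W\}$. $\wp_{fs}(A)$: finitely supported subsets of $A$; $\wp_{fin}$: finite subsets; $\wp_{cofin}(A)$: cofinite subsets of $A$; $T_{fin}(A)$: finite injective tuples of atoms with componentwise action. For sets $X,Y$, $Y^X_{fs}$ is the set of finitely supported functions $X\to Y$ (functions $f$ for which some finite $S$ gives $f(\pi\cdot x)=\pi\cdot f(x)$ for all $\pi\in Fix(S)$), with action $(\pi\cdot f)(x)=\pi\cdot f(\pi^{-1}\cdot x)$. $X$ is FSM Mostowski infinite if there exist an infinite finitely supported subset $Y\subseteq X$ and a finitely supported total order on $Y$. $X$ is FSM Tarski II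 infinite if there is a nonempty finitely supported family of finitely supported subsets of $X$ that is totally ordered by inclusion and has no maximal element. *)

theory Defs
  imports Main
begin

text \<open>Atoms are the elements of a type 'a (assumed infinite in the theorem).
  S_A: bijections of the atoms moving only finitely many atoms.\<close>

definition perm_fin :: "('a \<Rightarrow> 'a) \<Rightarrow> bool" where
  "perm_fin \<pi> \<longleftrightarrow> bij \<pi> \<and> finite {a. \<pi> a \<noteq> a}"

definition Fix :: "'a set \<Rightarrow> ('a \<Rightarrow> 'a) set" where
  "Fix S = {\<pi>. perm_fin \<pi> \<and> (\<forall>a\<in>S. \<pi> a = a)}"

definition supports :: "(('a \<Rightarrow> 'a) \<Rightarrow> 'b \<Rightarrow> 'b) \<Rightarrow> 'a set \<Rightarrow> 'b \<Rightarrow> bool" where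
  "supports act S x \<longleftrightarrow> (\<forall>\<pi>\<in>Fix S. act \<pi> x = x)"

definition fin_supp :: "(('a \<Rightarrow> 'a) \<Rightarrow> 'b \<Rightarrow> 'b) \<Rightarrow> 'b \<Rightarrow> bool" where
  "fin_supp act x \<longleftrightarrow> (\<exists>S. finite S \<and> supports act S x)"

definition atom_act :: "('a \<Rightarrow> 'a) \<Rightarrow> 'a \<Rightarrow> 'a" where
  "atom_act \<pi> a = \<pi> a"

definition prod_act :: "(('a \<Rightarrow> 'a) \<Rightarrow> 'b \<Rightarrow> 'b) \<Rightarrow> (('a \<Rightarrow> 'a) \<Rightarrow> 'c \<Rightarrow> 'c)
    \<Rightarrow> ('a \<Rightarrow> 'a) \<Rightarrow> 'b \<times> 'c \<Rightarrow> 'b \<times> 'c" where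
  "prod_act act1 act2 \<pi> p = (act1 \<pi> (fst p), act2 \<pi> (snd p))"

text \<open>Disjoint union X+Y, modelled by the sum type (Inl = tag 0, Inr = tag 1).\<close>
definition sum_act :: "(('a \<Rightarrow> 'a) \<Rightarrow> 'b \<Rightarrow> 'b) \<Rightarrow> (('a \<Rightarrow> 'a) \<Rightarrow> 'c \<Rightarrow> 'c)
    \<Rightarrow> ('a \<Rightarrow> 'a) \<Rightarrow> 'b + 'c \<Rightarrow> 'b + 'c" where
  "sum_act act1 act2 \<pi> z = map_sum (act1 \<pi>) (act2 \<pi>) z"

definition set_act :: "(('a \<Rightarrow> 'a) \<Rightarrow> 'b \<Rightarrow> 'b) \<Rightarrow> ('a \<Rightarrow> 'a) \<Rightarrow> 'b set \<Rightarrow> 'b set" where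
  "set_act act \<pi> W = act \<pi> ` W"

text \<open>Finite injective tuples of atoms: distinct lists, componentwise action.\<close>
definition tuple_act :: "('a \<Rightarrow> 'a) \<Rightarrow> 'a list \<Rightarrow> 'a list" where
  "tuple_act \<pi> xs = map \<pi> xs"

definition fun_act :: "(('a \<Rightarrow> 'a) \<Rightarrow> 'b \<Rightarrow> 'b) \<Rightarrow> (('a \<Rightarrow> 'a) \<Rightarrow> 'c \<Rightarrow> 'c)
    \<Rightarrow> ('a \<Rightarrow> 'a) \<Rightarrow> ('b \<Rightarrow> 'c) \<Rightarrow> ('b \<Rightarrow> 'c)" where
  "fun_act actX actY \<pi> f = (\<lambda>x. actY \<pi> (f (actX (inv \<pi>) x)))"

definition fs_funs :: "'b set \<Rightarrow> (('a \<Rightarrow> 'a) \<Rightarrow> 'b \<Rightarrow> 'b) \<Rightarrow> 'c set \<Rightarrow> (('a \<Rightarrow> 'a) \<Rightarrow> 'c \<Rightarrow> 'c)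
    \<Rightarrow> ('b \<Rightarrow> 'c) set" where
  "fs_funs X actX Y actY = {f. (\<forall>x\<in>X. f x \<in> Y) \<and>
      (\<exists>S. finite S \<and> (\<forall>\<pi>\<in>Fix S. \<forall>x\<in>X. f (actX \<pi> x) = actY \<pi> (f x)))}"

definition pfs_A :: "'a set set" where
  "pfs_A = {W. fin_supp (set_act atom_act) W}"

definition pfin :: "'b set \<Rightarrow> 'b set set" where
  "pfin X = {W. W \<subseteq> X \<and> finite W}"

definition pcofin_A :: "'a set set" where
  "pcofin_A = {W. finite (- W)}"

definition Tfin_A :: "'a list set" where
  "Tfin_A = {xs. distinct xs}"

definition FSM_Mostowski_infinite :: "(('a \<Rightarrow> 'a) \<Rightarrow> 'b \<Rightarrow> 'b) \<Rightarrow> 'b set \<Rightarrow> bool" where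
  "FSM_Mostowski_infinite act X \<longleftrightarrow>
     (\<exists>Y r. Y \<subseteq> X \<and> infinite Y \<and> fin_supp (set_act act) Y \<and>
        linear_order_on Y r \<and> fin_supp (set_act (prod_act act act)) r)"

definition FSM_Tarski_II_infinite :: "(('a \<Rightarrow> 'a) \<Rightarrow> 'b \<Rightarrow> 'b) \<Rightarrow> 'b set \<Rightarrow> bool" where
  "FSM_Tarski_II_infinite act X \<longleftrightarrow>
     (\<exists>\<F>. \<F> \<noteq> {} \<and> fin_supp (set_act (set_act act)) \<F> \<and>
        (\<forall>W\<in>\<F>. W \<subseteq> X \<and> fin_supp (set_act act) W) \<and>
        (\<forall>U\<in>\<F>. \<forall>V\<in>\<F>. U \<subseteq> V \<or> V \<subseteq> U) \<and>
        (\<forall>U\<in>\<F>. \<exists>V\<in>\<F>. U \<subset> V))"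

end

theory Submission
  imports Defs "HOL-Library.FuncSet"
begin


definition sw :: "'a \<Rightarrow> 'a \<Rightarrow> 'a \<Rightarrow> 'a" where
  "sw a b x = (if x = a then b else if x = b then a else x)"

lemma sw_sw[simp]: "sw a b (sw a b x) = x" by (auto simp: sw_def)
lemma sw_a[simp]: "sw a b a = b" by (auto simp: sw_def)
lemma sw_b[simp]: "sw a b b = a" by (auto simp: sw_def)
lemma sw_other: "x \<noteq> a \<Longrightarrow> x \<noteq> b \<Longrightarrow> sw a b x = x" by (auto simp: sw_def)

lemma inv_sw[simp]: "inv (sw a b) = sw a b"
  by (rule inv_equality) auto

lemma bij_sw: "bij (sw a b)"
  by (rule bij_betw_byWitness[where f'="sw a b"]) auto

lemma sw_Fix: "a \<notin> S \<Longrightarrow> b \<notin> S \<Longrightarrow> sw a b \<in> Fix S"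
proof -
  assume "a \<notin> S" "b \<notin> S"
  have "{x. sw a b x \<noteq> x} \<subseteq> {a,b}" by (auto simp: sw_def)
  hence "finite {x. sw a b x \<noteq> x}" by (rule finite_subset) auto
  thus ?thesis using \<open>a \<notin> S\<close> \<open>b \<notin> S\<close> bij_sw
    unfolding Fix_def perm_fin_def by (auto simp: sw_def)
qed

lemma mem_sw_image: "x \<in> sw a b ` W \<longleftrightarrow> sw a b x \<in> W"
proof
  assume "x \<in> sw a b ` W" then show "sw a b x \<in> W" by auto
next
  assume "sw a b x \<in> W" then show "x \<in> sw a b ` W" by (rule rev_image_eqI) simp
qed

definition invol :: "(('a \<Rightarrow> 'a) \<Rightarrow> 'b \<Rightarrow> 'b) \<Rightarrow> bool" where
  "invol act \<longleftrightarrow> (\<forall>a b x. act (sw a b) (act (sw a b) x) = x)"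

definition fixd :: "(('a \<Rightarrow> 'a) \<Rightarrow> 'b \<Rightarrow> 'b) \<Rightarrow> 'a set \<Rightarrow> 'b \<Rightarrow> bool" where
  "fixd act S x \<longleftrightarrow> (\<forall>a b. a \<notin> S \<longrightarrow> b \<notin> S \<longrightarrow> act (sw a b) x = x)"

lemma invol_atom: "invol atom_act" by (simp add: invol_def atom_act_def)
lemma invol_sum: "invol a1 \<Longrightarrow> invol a2 \<Longrightarrow> invol (sum_act a1 a2)"
  unfolding invol_def sum_act_def
proof (intro allI)
  fix a b x assume "\<forall>a b x. a1 (sw a b) (a1 (sw a b) x) = x" "\<forall>a b x. a2 (sw a b) (a2 (sw a b) x) = x"
  then show "map_sum (a1 (sw a b)) (a2 (sw a b)) (map_sum (a1 (sw a b)) (a2 (sw a b)) x) = x"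
    by (cases x) auto
qed
lemma invol_prod: "invol a1 \<Longrightarrow> invol a2 \<Longrightarrow> invol (prod_act a1 a2)"
  unfolding invol_def prod_act_def by simp
lemma invol_set: "invol a1 \<Longrightarrow> invol (set_act a1)"
  unfolding invol_def set_act_def by (simp add: image_image)
lemma invol_tuple: "invol tuple_act"
  unfolding invol_def tuple_act_def by (simp add: map_idI)
lemma invol_fun: "invol a2 \<Longrightarrow> invol (fun_act atom_act a2)"
  unfolding invol_def fun_act_def atom_act_def by simp

lemma most_gen:
  assumes inv: "invol act"
    and fin: "\<And>S. finite S \<Longrightarrow> finite {x\<in>X. fixd act S x}"
  shows "\<not> FSM_Mostowski_infinite act X"
proof
  assume "FSM_Mostowski_infinite act X"
  then obtain Y r where Y: "Y \<subseteq> X" "infinite Y" "fin_supp (set_act act) Y"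
     and r: "linear_order_on Y r" "fin_supp (set_act (prod_act act act)) r"
    unfolding FSM_Mostowski_infinite_def by blast
  obtain S1 where S1: "finite S1" "supports (set_act act) S1 Y" using Y(3) unfolding fin_supp_def by blast
  obtain S2 where S2: "finite S2" "supports (set_act (prod_act act act)) S2 r"
    using r(2) unfolding fin_supp_def by blast
  let ?S = "S1 \<union> S2"
  have "\<forall>y\<in>Y. fixd act ?S y"
    unfolding fixd_def
  proof (intro ballI allI impI)
    fix y a b assume y: "y \<in> Y" and a: "a \<notin> ?S" and b: "b \<notin> ?S"
    let ?s = "sw a b"
    have "?s \<in> Fix S1" "?s \<in> Fix S2" using a b sw_Fix by auto
    hence YY: "act ?s ` Y = Y" and rr: "(\<lambda>p. (act ?s (fst p), act ?s (snd p))) ` r = r"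
      using S1(2) S2(2) unfolding supports_def set_act_def prod_act_def by blast+
    have ii: "\<And>x. act ?s (act ?s x) = x" using inv invol_def by metis
    have z: "act ?s y \<in> Y" using YY y by blast
    have ant: "antisym r" and tot: "total_on Y r" using r(1)
      unfolding linear_order_on_def partial_order_on_def by blast+
    have mv: "\<And>u v. (u,v) \<in> r \<Longrightarrow> (act ?s u, act ?s v) \<in> r"
    proof -
      fix u v assume "(u,v) \<in> r"
      then have "(act ?s u, act ?s v) \<in> (\<lambda>p. (act ?s (fst p), act ?s (snd p))) ` r"
        by (rule rev_image_eqI) simp
      then show "(act ?s u, act ?s v) \<in> r" using rr by simp
    qed
    show "act ?s y = y"
    proof (rule ccontr)
      assume ne: "act ?s y \<noteq> y"
      then have "(y, act ?s y) \<in> r \<or> (act ?s y, y) \<in> r" using tot y z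
        unfolding total_on_def by blast
      then show False
      proof
        assume h: "(y, act ?s y) \<in> r"
        from mv[OF h] have "(act ?s y, y) \<in> r" by (simp add: ii)
        with h ant ne show False unfolding antisym_def by blast
      next
        assume h: "(act ?s y, y) \<in> r"
        from mv[OF h] have "(y, act ?s y) \<in> r" by (simp add: ii)
        with h ant ne show False unfolding antisym_def by blast
      qed
    qed
  qed
  hence "Y \<subseteq> {x\<in>X. fixd act ?S x}" using Y(1) by auto
  moreover have "finite {x\<in>X. fixd act ?S x}" using fin S1(1) S2(1) by simp
  ultimately show False using Y(2) finite_subset by blast
qed

lemma tarski_gen:
  assumes inv: "invol act"
    and fin: "\<And>S. finite S \<Longrightarrow> finite {W. W \<subseteq> X \<and> fixd (set_act act) S W}"
  shows "\<not> FSM_Tarski_II_infinite act X"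
proof
  assume "FSM_Tarski_II_infinite act X"
  then obtain F where F: "F \<noteq> {}" "fin_supp (set_act (set_act act)) F"
      "\<forall>W\<in>F. W \<subseteq> X \<and> fin_supp (set_act act) W" "\<forall>U\<in>F. \<forall>V\<in>F. U \<subseteq> V \<or> V \<subseteq> U" "\<forall>U\<in>F. \<exists>V\<in>F. U \<subset> V"
    unfolding FSM_Tarski_II_infinite_def by (elim exE conjE) (rule that)
  obtain S where S: "finite S" "supports (set_act (set_act act)) S F" using F(2) unfolding fin_supp_def by blast
  have "\<forall>W\<in>F. fixd (set_act act) S W"
    unfolding fixd_def
  proof (intro ballI allI impI)
    fix W a b assume W: "W \<in> F" and a: "a \<notin> S" and b: "b \<notin> S"
    let ?s = "sw a b"
    have sF: "?s \<in> Fix S" by (rule sw_Fix[OF a b])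
    have FF0: "set_act (set_act act) ?s F = F" using S(2) sF unfolding supports_def by blast
    have FF: "set_act act ?s ` F = F" using FF0 unfolding set_act_def[of "set_act act"] .
    have ii: "\<And>x. act ?s (act ?s x) = x" using inv unfolding invol_def by blast
    have ii2: "\<And>V. act ?s ` act ?s ` V = V" unfolding image_image ii by simp
    have "set_act act ?s W \<in> set_act act ?s ` F" using W by (rule imageI)
    hence W': "act ?s ` W \<in> F" unfolding FF by (simp only: set_act_def)
    have "W \<subseteq> act ?s ` W \<or> act ?s ` W \<subseteq> W" using F(4) W W' by blast
    then have "act ?s ` W = W"
    proof
      assume h: "W \<subseteq> act ?s ` W"
      hence "act ?s ` W \<subseteq> act ?s ` act ?s ` W" by blast
      with h show ?thesis unfolding ii2 by (rule subset_antisym[rotated])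
    next
      assume h: "act ?s ` W \<subseteq> W"
      hence "act ?s ` act ?s ` W \<subseteq> act ?s ` W" by blast
      with h show ?thesis unfolding ii2 by (rule subset_antisym)
    qed
    thus "set_act act ?s W = W" by (simp add: set_act_def)
  qed
  hence "F \<subseteq> {W. W \<subseteq> X \<and> fixd (set_act act) S W}" using F(3) by auto
  hence "finite F" using fin[OF S(1)] finite_subset by blast
  then obtain m where m: "m \<in> F" "\<forall>b\<in>F. m \<le> b \<longrightarrow> m = b"
    using finite_has_maximal[OF _ F(1)] by blast
  obtain V where "V \<in> F" "m \<subset> V" using F(5) m(1) by blast
  then show False using m(2) by blast
qed

lemma inv_mem:
  assumes "invol act" "fixd (set_act act) S W" "a \<notin> S" "b \<notin> S"
  shows "act (sw a b) e \<in> W \<longleftrightarrow> e \<in> W"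
proof -
  have W: "act (sw a b) ` W = W" using assms(2-4) unfolding fixd_def set_act_def by blast
  have ii: "act (sw a b) (act (sw a b) e) = e" using assms(1) invol_def by metis
  show ?thesis
  proof
    assume "act (sw a b) e \<in> W"
    then have "act (sw a b) (act (sw a b) e) \<in> act (sw a b) ` W" by blast
    then show "e \<in> W" using W ii by simp
  next
    assume "e \<in> W" then have "act (sw a b) e \<in> act (sw a b) ` W" by blast
    then show "act (sw a b) e \<in> W" using W by simp
  qed
qed

lemma fin_sets_K:
  assumes "finite K" "\<forall>e\<in>X. \<exists>k\<in>K. \<forall>W. P W \<longrightarrow> (e \<in> W \<longleftrightarrow> k \<in> W)"
  shows "finite {W. W \<subseteq> X \<and> P W}"
proof -
  let ?A = "{W. W \<subseteq> X \<and> P W}"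
  have "inj_on (\<lambda>W. W \<inter> K) ?A"
  proof (rule inj_onI)
    fix W1 W2 assume h: "W1 \<in> ?A" "W2 \<in> ?A" "W1 \<inter> K = W2 \<inter> K"
    show "W1 = W2"
    proof (intro set_eqI iffI)
      fix e assume "e \<in> W1"
      then have "e \<in> X" using h by auto
      then obtain k where "k \<in> K" "\<forall>W. P W \<longrightarrow> (e \<in> W \<longleftrightarrow> k \<in> W)" using assms(2) by blast
      then show "e \<in> W2" using h \<open>e \<in> W1\<close> by blast
    next
      fix e assume "e \<in> W2"
      then have "e \<in> X" using h by auto
      then obtain k where "k \<in> K" "\<forall>W. P W \<longrightarrow> (e \<in> W \<longleftrightarrow> k \<in> W)" using assms(2) by blast
      then show "e \<in> W1" using h \<open>e \<in> W2\<close> by blast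
    qed
  qed
  moreover have "(\<lambda>W. W \<inter> K) ` ?A \<subseteq> Pow K" by auto
  ultimately show ?thesis using assms(1) by (meson finite_Pow_iff finite_imageD finite_subset)
qed

lemma fin_elems_from_sets:
  assumes "finite {W. W \<subseteq> X \<and> fixd (set_act act) S W}"
  shows "finite {x\<in>X. fixd act S x}"
proof -
  have "inj_on (\<lambda>x. {x}) {x\<in>X. fixd act S x}" by (auto intro: inj_onI)
  moreover have "(\<lambda>x. {x}) ` {x\<in>X. fixd act S x} \<subseteq> {W. W \<subseteq> X \<and> fixd (set_act act) S W}"
    by (auto simp: fixd_def set_act_def)
  ultimately show ?thesis using assms by (meson finite_imageD finite_subset)
qed



lemma atom_sets_fin:
  assumes inf: "infinite (UNIV :: 'a set)" and S: "finite S"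
  shows "finite {W :: 'a set. W \<subseteq> UNIV \<and> fixd (set_act atom_act) S W}"
proof -
  obtain x0 :: 'a where x0: "x0 \<notin> S" using ex_new_if_finite[OF inf S] by blast
  show ?thesis
  proof (rule fin_sets_K[where K = "insert x0 S"])
    show "finite (insert x0 S)" using S by simp
    show "\<forall>e\<in>UNIV. \<exists>k\<in>insert x0 S. \<forall>W. fixd (set_act atom_act) S W \<longrightarrow> (e \<in> W \<longleftrightarrow> k \<in> W)"
    proof
      fix e :: 'a
      show "\<exists>k\<in>insert x0 S. \<forall>W. fixd (set_act atom_act) S W \<longrightarrow> (e \<in> W \<longleftrightarrow> k \<in> W)"
      proof (cases "e \<in> S")
        case True then show ?thesis by blast
      next
        case False
        have "\<forall>W. fixd (set_act atom_act) S W \<longrightarrow> (e \<in> W \<longleftrightarrow> x0 \<in> W)"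
          using inv_mem[OF invol_atom _ False x0, of _ e] by (simp add: atom_act_def)
        then show ?thesis by blast
      qed
    qed
  qed
qed

lemma sum_sets_fin:
  assumes inf: "infinite (UNIV :: 'a set)" and S: "finite S"
  shows "finite {W :: ('a+'a) set. W \<subseteq> UNIV \<and> fixd (set_act (sum_act atom_act atom_act)) S W}"
proof -
  obtain x0 :: 'a where x0: "x0 \<notin> S" using ex_new_if_finite[OF inf S] by blast
  let ?K = "Inl ` insert x0 S \<union> Inr ` insert x0 S"
  have iv: "invol (sum_act atom_act atom_act)" by (simp add: invol_sum invol_atom)
  show ?thesis
  proof (rule fin_sets_K[where K = ?K])
    show "finite ?K" using S by simp
    show "\<forall>e\<in>UNIV. \<exists>k\<in>?K. \<forall>W. fixd (set_act (sum_act atom_act atom_act)) S W \<longrightarrow> (e \<in> W \<longleftrightarrow> k \<in> W)"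
    proof
      fix e :: "'a+'a"
      show "\<exists>k\<in>?K. \<forall>W. fixd (set_act (sum_act atom_act atom_act)) S W \<longrightarrow> (e \<in> W \<longleftrightarrow> k \<in> W)"
      proof (cases e)
        case (Inl p)
        show ?thesis
        proof (cases "p \<in> S")
          case True then show ?thesis using Inl by blast
        next
          case False
          have "\<forall>W. fixd (set_act (sum_act atom_act atom_act)) S W \<longrightarrow> (e \<in> W \<longleftrightarrow> Inl x0 \<in> W)"
            using inv_mem[OF iv _ False x0, of _ e] Inl by (simp add: atom_act_def sum_act_def)
          then show ?thesis by blast
        qed
      next
        case (Inr p)
        show ?thesis
        proof (cases "p \<in> S")
          case True then show ?thesis using Inr by blast
        next
          case False
          have "\<forall>W. fixd (set_act (sum_act atom_act atom_act)) S W \<longrightarrow> (e \<in> W \<longleftrightarrow> Inr x0 \<in> W)"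
            using inv_mem[OF iv _ False x0, of _ e] Inr by (simp add: atom_act_def sum_act_def)
          then show ?thesis by blast
        qed
      qed
    qed
  qed
qed

lemma prod_sets_fin:
  assumes inf: "infinite (UNIV :: 'a set)" and S: "finite S"
  shows "finite {W :: ('a\<times>'a) set. W \<subseteq> UNIV \<and> fixd (set_act (prod_act atom_act atom_act)) S W}"
proof -
  obtain x0 :: 'a where x0: "x0 \<notin> S" using ex_new_if_finite[OF inf S] by blast
  obtain x1 :: 'a where x1: "x1 \<notin> insert x0 S" using ex_new_if_finite[OF inf] S by (meson finite_insert)
  let ?K1 = "insert x1 (insert x0 S)"
  let ?K = "?K1 \<times> ?K1"
  let ?act = "prod_act atom_act atom_act"
  have iv: "invol ?act" by (simp add: invol_prod invol_atom)
  have st: "\<And>W a b p q. fixd (set_act ?act) S W \<Longrightarrow> a \<notin> S \<Longrightarrow> b \<notin> S \<Longrightarrow>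
      ((sw a b p, sw a b q) \<in> W \<longleftrightarrow> (p,q) \<in> W)"
    using inv_mem[OF iv, of S _ _ _ "(p,q)" for p q] by (simp add: prod_act_def atom_act_def)
  show ?thesis
  proof (rule fin_sets_K[where K = ?K])
    show "finite ?K" using S by simp
    show "\<forall>e\<in>UNIV. \<exists>k\<in>?K. \<forall>W. fixd (set_act ?act) S W \<longrightarrow> (e \<in> W \<longleftrightarrow> k \<in> W)"
    proof
      fix e :: "'a\<times>'a"
      obtain p q where e: "e = (p,q)" by (cases e)
      show "\<exists>k\<in>?K. \<forall>W. fixd (set_act ?act) S W \<longrightarrow> (e \<in> W \<longleftrightarrow> k \<in> W)"
      proof (cases "p \<in> S")
        case pS: True
        show ?thesis
        proof (cases "q \<in> S")
          case True then show ?thesis using pS e by blast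
        next
          case False
          have "sw q x0 p = p" using pS False x0 by (auto simp: sw_def)
          then have "\<forall>W. fixd (set_act ?act) S W \<longrightarrow> (e \<in> W \<longleftrightarrow> (p,x0) \<in> W)"
            using st[OF _ False x0, of _ p q] e by simp
          then show ?thesis using pS by blast
        qed
      next
        case pS: False
        show ?thesis
        proof (cases "q \<in> S")
          case True
          have "sw p x0 q = q" using pS True x0 by (auto simp: sw_def)
          then have "\<forall>W. fixd (set_act ?act) S W \<longrightarrow> (e \<in> W \<longleftrightarrow> (x0,q) \<in> W)"
            using st[OF _ pS x0, of _ p q] e by simp
          then show ?thesis using True by blast
        next
          case qS: False
          show ?thesis
          proof (cases "p = q")
            case True
            then have "\<forall>W. fixd (set_act ?act) S W \<longrightarrow> (e \<in> W \<longleftrightarrow> (x0,x0) \<in> W)"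
              using st[OF _ pS x0, of _ p q] e by simp
            then show ?thesis by blast
          next
            case False
            define q' where "q' = sw p x0 q"
            have q'S: "q' \<notin> S" using qS x0 pS by (auto simp: sw_def q'_def)
            have q'x0: "q' \<noteq> x0" using False by (auto simp: sw_def q'_def)
            have 1: "\<forall>W. fixd (set_act ?act) S W \<longrightarrow> (e \<in> W \<longleftrightarrow> (x0,q') \<in> W)"
              using st[OF _ pS x0, of _ p q] e q'_def by simp
            have "sw q' x1 x0 = x0" using q'x0 x1 by (auto simp: sw_def)
            then have 2: "\<forall>W. fixd (set_act ?act) S W \<longrightarrow> ((x0,q') \<in> W \<longleftrightarrow> (x0,x1) \<in> W)"
              using st[OF _ q'S, of _ x1 x0 q'] x1 by simp
            show ?thesis using 1 2 by blast
          qed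
        qed
      qed
    qed
  qed
qed



lemma pfinpfs_fin:
  assumes inf: "infinite (UNIV :: 'a set)" and S: "finite S"
  shows "finite {y \<in> pfin (pfs_A :: 'a set set). fixd (set_act (set_act atom_act)) S y}"
proof -
  let ?AF = "{W :: 'a set. W \<subseteq> UNIV \<and> fixd (set_act atom_act) S W}"
  have key: "fixd (set_act atom_act) S W"
    if y: "y \<in> pfin pfs_A" "fixd (set_act (set_act atom_act)) S y" and W: "W \<in> y" for y W
  proof (rule ccontr)
    assume nf: "\<not> fixd (set_act atom_act) S W"
    have yfin: "finite y" and Wp: "W \<in> pfs_A" using y W unfolding pfin_def by auto
    have ymv: "\<And>a b V. a \<notin> S \<Longrightarrow> b \<notin> S \<Longrightarrow> V \<in> y \<Longrightarrow> sw a b ` V \<in> y"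
      using y(2) unfolding fixd_def set_act_def atom_act_def
      by (metis (no_types, lifting) image_eqI image_ident)
    obtain T where T: "finite T" "supports (set_act atom_act) T W" using Wp
      unfolding pfs_A_def fin_supp_def by blast
    have Tm: "\<And>c d. c \<notin> T \<Longrightarrow> d \<notin> T \<Longrightarrow> (c \<in> W \<longleftrightarrow> d \<in> W)"
    proof -
      fix c d assume "c \<notin> T" "d \<notin> T"
      then have "sw c d ` W = W" using T(2) sw_Fix unfolding supports_def set_act_def atom_act_def
        by (metis (no_types, lifting) ext)
      then show "c \<in> W \<longleftrightarrow> d \<in> W" by (metis mem_sw_image sw_a)
    qed
    obtain a b where ab: "a \<notin> S" "b \<notin> S" "sw a b ` W \<noteq> W"
      using nf unfolding fixd_def set_act_def atom_act_def by (metis ext)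
    have "\<not> (a \<in> W \<longleftrightarrow> b \<in> W)"
    proof
      assume h: "a \<in> W \<longleftrightarrow> b \<in> W"
      have "sw a b ` W = W"
      proof (rule set_eqI)
        fix x show "x \<in> sw a b ` W \<longleftrightarrow> x \<in> W"
          unfolding mem_sw_image using h by (auto simp: sw_def)
      qed
      with ab show False by simp
    qed
    then obtain a' b' where ab': "a' \<notin> S" "b' \<notin> S" "a' \<in> W" "b' \<notin> W" using ab by blast
    let ?G = "- (S \<union> T \<union> {a',b'})"
    have Ginf: "infinite ?G" using inf S T(1)
      by (metis Compl_eq_Diff_UNIV Diff_infinite_finite finite.emptyI finite.insertI finite_UnI)
    then obtain c0 where c0: "c0 \<in> ?G" by (metis finite.emptyI equals0I)
    show False
    proof (cases "c0 \<in> W")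
      case True
      have inG: "\<And>c. c \<in> ?G \<Longrightarrow> c \<in> W" using Tm True c0 by blast
      let ?f = "\<lambda>c. sw b' c ` W"
      have "inj_on ?f ?G"
      proof (rule inj_onI)
        fix c c' assume h: "c \<in> ?G" "c' \<in> ?G" "?f c = ?f c'"
        show "c = c'"
        proof (rule ccontr)
          assume "c \<noteq> c'"
          have "c \<in> ?f c'" unfolding mem_sw_image using h \<open>c \<noteq> c'\<close> inG
            by (auto simp: sw_def)
          moreover have "c \<notin> ?f c" unfolding mem_sw_image using ab' by simp
          ultimately show False using h by simp
        qed
      qed
      moreover have "?f ` ?G \<subseteq> y" using ymv ab' W by auto
      ultimately show False using Ginf yfin by (meson finite_imageD finite_subset)
    next
      case False
      have inG: "\<And>c. c \<in> ?G \<Longrightarrow> c \<notin> W" using Tm False c0 by blast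
      let ?f = "\<lambda>c. sw a' c ` W"
      have "inj_on ?f ?G"
      proof (rule inj_onI)
        fix c c' assume h: "c \<in> ?G" "c' \<in> ?G" "?f c = ?f c'"
        show "c = c'"
        proof (rule ccontr)
          assume "c \<noteq> c'"
          have "c \<notin> ?f c'" unfolding mem_sw_image using h \<open>c \<noteq> c'\<close> inG
            by (auto simp: sw_def)
          moreover have "c \<in> ?f c" unfolding mem_sw_image using ab' by simp
          ultimately show False using h by simp
        qed
      qed
      moreover have "?f ` ?G \<subseteq> y" using ymv ab' W by auto
      ultimately show False using Ginf yfin by (meson finite_imageD finite_subset)
    qed
  qed
  have "{y \<in> pfin pfs_A. fixd (set_act (set_act atom_act)) S y} \<subseteq> Pow ?AF"
    using key by blast
  moreover have "finite (Pow ?AF)" using atom_sets_fin[OF inf S] by simp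
  ultimately show ?thesis by (rule finite_subset)
qed



lemma fun_fin:
  assumes inf: "infinite (UNIV :: 'a set)" and S: "finite S"
    and cod: "\<And>S'. finite S' \<Longrightarrow> finite {v\<in>V. fixd actY S' v}"
  shows "finite {f \<in> fs_funs (UNIV :: 'a set) atom_act V actY. fixd (fun_act atom_act actY) S f}"
proof -
  obtain x0 :: 'a where x0: "x0 \<notin> S" using ex_new_if_finite[OF inf S] by blast
  define S' where "S' = insert x0 S"
  have S'fin: "finite S'" using S S'_def by simp
  let ?FV = "{v\<in>V. fixd actY S' v}"
  let ?A = "{f \<in> fs_funs (UNIV :: 'a set) atom_act V actY. fixd (fun_act atom_act actY) S f}"
  have eqv: "f (sw a b x) = actY (sw a b) (f x)" if f: "f \<in> ?A" and a: "a \<notin> S" and b: "b \<notin> S" for f a b x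
  proof -
    have "fun_act atom_act actY (sw a b) f = f" using f a b unfolding fixd_def by blast
    hence "fun_act atom_act actY (sw a b) f (sw a b x) = f (sw a b x)" by simp
    thus ?thesis by (simp add: fun_act_def atom_act_def)
  qed
  have inV: "f x \<in> V" if "f \<in> ?A" for f x using that unfolding fs_funs_def by blast
  have "inj_on (\<lambda>f. restrict f S') ?A"
  proof (rule inj_onI)
    fix f g assume f: "f \<in> ?A" and g: "g \<in> ?A" and h: "restrict f S' = restrict g S'"
    have agree: "f x = g x" if "x \<in> S'" for x using h that by (metis restrict_apply')
    show "f = g"
    proof
      fix x show "f x = g x"
      proof (cases "x \<in> S'")
        case True then show ?thesis by (rule agree)
      next
        case False
        hence xS: "x \<notin> S" and xx0: "x \<noteq> x0" using S'_def by auto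
        have "f x = f (sw x0 x x0)" by simp
        also have "\<dots> = actY (sw x0 x) (f x0)" by (rule eqv[OF f x0 xS])
        also have "\<dots> = actY (sw x0 x) (g x0)" using agree S'_def by simp
        also have "\<dots> = g (sw x0 x x0)" by (rule eqv[OF g x0 xS, symmetric])
        finally show ?thesis by simp
      qed
    qed
  qed
  moreover have "(\<lambda>f. restrict f S') ` ?A \<subseteq> (\<Pi>\<^sub>E i\<in>S'. ?FV)"
  proof
    fix r assume "r \<in> (\<lambda>f. restrict f S') ` ?A"
    then obtain f where f: "f \<in> ?A" and r: "r = restrict f S'" by blast
    have "f x \<in> ?FV" if x: "x \<in> S'" for x
    proof -
      have "fixd actY S' (f x)" unfolding fixd_def
      proof (intro allI impI)
        fix a b assume a: "a \<notin> S'" and b: "b \<notin> S'"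
        have "sw a b x = x" using a b x by (auto simp: sw_def)
        hence "f x = f (sw a b x)" by simp
        also have "\<dots> = actY (sw a b) (f x)" using a b S'_def by (intro eqv[OF f]) auto
        finally show "actY (sw a b) (f x) = f x" by simp
      qed
      thus ?thesis using inV[OF f] by simp
    qed
    thus "r \<in> (\<Pi>\<^sub>E i\<in>S'. ?FV)" using r by auto
  qed
  moreover have "finite (\<Pi>\<^sub>E i\<in>S'. ?FV)" using S'fin cod[OF S'fin] by (intro finite_PiE) auto
  ultimately show ?thesis by (meson finite_imageD finite_subset)
qed

lemma cod_atom:
  assumes inf: "infinite (UNIV :: 'a set)" and S: "finite S"
  shows "finite {v\<in>(UNIV :: 'a set). fixd atom_act S v}"
proof -
  have "{v\<in>(UNIV :: 'a set). fixd atom_act S v} \<subseteq> S"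
  proof
    fix v assume v: "v \<in> {v\<in>(UNIV :: 'a set). fixd atom_act S v}"
    show "v \<in> S"
    proof (rule ccontr)
      assume vS: "v \<notin> S"
      obtain b where b: "b \<notin> insert v S" using ex_new_if_finite[OF inf] S by (meson finite_insert)
      have "atom_act (sw v b) v = v" using v vS b unfolding fixd_def by blast
      then show False using b by (simp add: atom_act_def)
    qed
  qed
  thus ?thesis using S finite_subset by blast
qed

lemma map_fixed: "map f xs = xs \<Longrightarrow> x \<in> set xs \<Longrightarrow> f x = x"
  by (induction xs) auto

lemma cod_tuple:
  assumes inf: "infinite (UNIV :: 'a set)" and S: "finite S"
  shows "finite {v\<in>(Tfin_A :: 'a list set). fixd tuple_act S v}"
proof -
  have "{v\<in>(Tfin_A :: 'a list set). fixd tuple_act S v} \<subseteq> {xs. set xs \<subseteq> S \<and> length xs \<le> card S}"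
  proof
    fix xs assume h: "xs \<in> {v\<in>(Tfin_A :: 'a list set). fixd tuple_act S v}"
    have sub: "set xs \<subseteq> S"
    proof
      fix v assume vx: "v \<in> set xs"
      show "v \<in> S"
      proof (rule ccontr)
        assume vS: "v \<notin> S"
        obtain b where b: "b \<notin> insert v S" using ex_new_if_finite[OF inf] S by (meson finite_insert)
        have "map (sw v b) xs = xs" using h vS b unfolding fixd_def tuple_act_def by blast
        hence "sw v b v = v" using vx by (rule map_fixed)
        then show False using b by simp
      qed
    qed
    have "distinct xs" using h unfolding Tfin_A_def by simp
    hence "length xs = card (set xs)" by (simp add: distinct_card)
    also have "\<dots> \<le> card S" using sub by (rule card_mono[OF S])
    finally show "xs \<in> {xs. set xs \<subseteq> S \<and> length xs \<le> card S}" using sub by simp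
  qed
  thus ?thesis using finite_lists_length_le[OF S] finite_subset by blast
qed

lemma cod_pfs:
  assumes inf: "infinite (UNIV :: 'a set)" and S: "finite S"
  shows "finite {v\<in>(pfs_A :: 'a set set). fixd (set_act atom_act) S v}"
proof -
  have "{v\<in>(pfs_A :: 'a set set). fixd (set_act atom_act) S v} \<subseteq> {W. W \<subseteq> UNIV \<and> fixd (set_act atom_act) S W}"
    by auto
  thus ?thesis using atom_sets_fin[OF inf S] finite_subset by blast
qed

theorem mainTheorem17:
  assumes "infinite (UNIV :: 'a set)"
  shows
   "infinite (UNIV :: 'a set) \<and> infinite (UNIV :: ('a + 'a) set) \<and> infinite (UNIV :: ('a \<times> 'a) set)
    \<and> \<not> FSM_Mostowski_infinite (atom_act :: ('a \<Rightarrow> 'a) \<Rightarrow> 'a \<Rightarrow> 'a) UNIV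
    \<and> \<not> FSM_Mostowski_infinite (sum_act (atom_act :: ('a \<Rightarrow> 'a) \<Rightarrow> 'a \<Rightarrow> 'a) atom_act) UNIV
    \<and> \<not> FSM_Mostowski_infinite (prod_act (atom_act :: ('a \<Rightarrow> 'a) \<Rightarrow> 'a \<Rightarrow> 'a) atom_act) UNIV
    \<and> \<not> FSM_Tarski_II_infinite (atom_act :: ('a \<Rightarrow> 'a) \<Rightarrow> 'a \<Rightarrow> 'a) UNIV
    \<and> \<not> FSM_Tarski_II_infinite (sum_act (atom_act :: ('a \<Rightarrow> 'a) \<Rightarrow> 'a \<Rightarrow> 'a) atom_act) UNIV
    \<and> \<not> FSM_Tarski_II_infinite (prod_act (atom_act :: ('a \<Rightarrow> 'a) \<Rightarrow> 'a \<Rightarrow> 'a) atom_act) UNIV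
    \<and> \<not> FSM_Mostowski_infinite (set_act (atom_act :: ('a \<Rightarrow> 'a) \<Rightarrow> 'a \<Rightarrow> 'a)) (pfin UNIV)
    \<and> \<not> FSM_Mostowski_infinite (set_act (atom_act :: ('a \<Rightarrow> 'a) \<Rightarrow> 'a \<Rightarrow> 'a)) pcofin_A
    \<and> \<not> FSM_Mostowski_infinite (set_act (atom_act :: ('a \<Rightarrow> 'a) \<Rightarrow> 'a \<Rightarrow> 'a)) pfs_A
    \<and> \<not> FSM_Mostowski_infinite (set_act (set_act (atom_act :: ('a \<Rightarrow> 'a) \<Rightarrow> 'a \<Rightarrow> 'a))) (pfin pfs_A)
    \<and> \<not> FSM_Mostowski_infinite (fun_act (atom_act :: ('a \<Rightarrow> 'a) \<Rightarrow> 'a \<Rightarrow> 'a) atom_act)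
          (fs_funs UNIV atom_act UNIV atom_act)
    \<and> \<not> FSM_Mostowski_infinite (fun_act (atom_act :: ('a \<Rightarrow> 'a) \<Rightarrow> 'a \<Rightarrow> 'a) tuple_act)
          (fs_funs UNIV atom_act Tfin_A tuple_act)
    \<and> \<not> FSM_Mostowski_infinite (fun_act (atom_act :: ('a \<Rightarrow> 'a) \<Rightarrow> 'a \<Rightarrow> 'a) (set_act atom_act))
          (fs_funs UNIV atom_act pfs_A (set_act atom_act))"
proof -
  note inf = assms
  have i1: "infinite (UNIV :: ('a + 'a) set)"
  proof
    assume "finite (UNIV :: ('a + 'a) set)"
    hence "finite (range (Inl :: 'a \<Rightarrow> 'a + 'a))" by (rule finite_subset[rotated]) simp
    hence "finite (UNIV :: 'a set)" by (rule finite_imageD) (simp add: inj_on_def)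
    with inf show False by simp
  qed
  have i2: "infinite (UNIV :: ('a \<times> 'a) set)" using inf by (simp add: finite_prod)
  have as: "\<And>S. finite S \<Longrightarrow> finite {W :: 'a set. W \<subseteq> UNIV \<and> fixd (set_act atom_act) S W}"
    by (rule atom_sets_fin[OF inf])
  have ivs: "invol (sum_act atom_act atom_act)" "invol (prod_act atom_act atom_act)"
    "invol (set_act atom_act)" "invol (set_act (set_act atom_act))"
    by (simp_all add: invol_sum invol_prod invol_set invol_atom)
  have m1: "\<not> FSM_Mostowski_infinite (atom_act :: ('a \<Rightarrow> 'a) \<Rightarrow> 'a \<Rightarrow> 'a) UNIV"
    by (rule most_gen[OF invol_atom fin_elems_from_sets[OF as]])
  have m2: "\<not> FSM_Mostowski_infinite (sum_act (atom_act :: ('a \<Rightarrow> 'a) \<Rightarrow> 'a \<Rightarrow> 'a) atom_act) UNIV"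
    by (rule most_gen[OF ivs(1) fin_elems_from_sets[OF sum_sets_fin[OF inf]]])
  have m3: "\<not> FSM_Mostowski_infinite (prod_act (atom_act :: ('a \<Rightarrow> 'a) \<Rightarrow> 'a \<Rightarrow> 'a) atom_act) UNIV"
    by (rule most_gen[OF ivs(2) fin_elems_from_sets[OF prod_sets_fin[OF inf]]])
  have t1: "\<not> FSM_Tarski_II_infinite (atom_act :: ('a \<Rightarrow> 'a) \<Rightarrow> 'a \<Rightarrow> 'a) UNIV"
    by (rule tarski_gen[OF invol_atom as])
  have t2: "\<not> FSM_Tarski_II_infinite (sum_act (atom_act :: ('a \<Rightarrow> 'a) \<Rightarrow> 'a \<Rightarrow> 'a) atom_act) UNIV"
    by (rule tarski_gen[OF ivs(1) sum_sets_fin[OF inf]])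
  have t3: "\<not> FSM_Tarski_II_infinite (prod_act (atom_act :: ('a \<Rightarrow> 'a) \<Rightarrow> 'a \<Rightarrow> 'a) atom_act) UNIV"
    by (rule tarski_gen[OF ivs(2) prod_sets_fin[OF inf]])
  have sub: "\<And>X S. finite S \<Longrightarrow> finite {x \<in> X. fixd (set_act (atom_act :: ('a \<Rightarrow> 'a) \<Rightarrow> 'a \<Rightarrow> 'a)) S x}"
  proof -
    fix X :: "'a set set" and S :: "'a set" assume S: "finite S"
    have "{x \<in> X. fixd (set_act atom_act) S x} \<subseteq> {W. W \<subseteq> UNIV \<and> fixd (set_act atom_act) S W}" by auto
    thus "finite {x \<in> X. fixd (set_act atom_act) S x}" using as[OF S] finite_subset by blast
  qed
  have p1: "\<not> FSM_Mostowski_infinite (set_act (atom_act :: ('a \<Rightarrow> 'a) \<Rightarrow> 'a \<Rightarrow> 'a)) (pfin UNIV)"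
    by (rule most_gen[OF ivs(3) sub])
  have p2: "\<not> FSM_Mostowski_infinite (set_act (atom_act :: ('a \<Rightarrow> 'a) \<Rightarrow> 'a \<Rightarrow> 'a)) pcofin_A"
    by (rule most_gen[OF ivs(3) sub])
  have p3: "\<not> FSM_Mostowski_infinite (set_act (atom_act :: ('a \<Rightarrow> 'a) \<Rightarrow> 'a \<Rightarrow> 'a)) pfs_A"
    by (rule most_gen[OF ivs(3) sub])
  have p4: "\<not> FSM_Mostowski_infinite (set_act (set_act (atom_act :: ('a \<Rightarrow> 'a) \<Rightarrow> 'a \<Rightarrow> 'a))) (pfin pfs_A)"
    by (rule most_gen[OF ivs(4) pfinpfs_fin[OF inf]])
  have f1: "\<not> FSM_Mostowski_infinite (fun_act (atom_act :: ('a \<Rightarrow> 'a) \<Rightarrow> 'a \<Rightarrow> 'a) atom_act)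
          (fs_funs UNIV atom_act UNIV atom_act)"
    by (rule most_gen[OF invol_fun[OF invol_atom] fun_fin[OF inf _ cod_atom[OF inf]]])
  have f2: "\<not> FSM_Mostowski_infinite (fun_act (atom_act :: ('a \<Rightarrow> 'a) \<Rightarrow> 'a \<Rightarrow> 'a) tuple_act)
          (fs_funs UNIV atom_act Tfin_A tuple_act)"
    by (rule most_gen[OF invol_fun[OF invol_tuple] fun_fin[OF inf _ cod_tuple[OF inf]]])
  have f3: "\<not> FSM_Mostowski_infinite (fun_act (atom_act :: ('a \<Rightarrow> 'a) \<Rightarrow> 'a \<Rightarrow> 'a) (set_act atom_act))
          (fs_funs UNIV atom_act pfs_A (set_act atom_act))"
    by (rule most_gen[OF invol_fun[OF ivs(3)] fun_fin[OF inf _ cod_pfs[OF inf]]])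
  show ?thesis using inf i1 i2 m1 m2 m3 t1 t2 t3 p1 p2 p3 p4 f1 f2 f3 by simp
qed

end
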